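(* Let $V_1\subset\mathbb{R}^{d_1}$ and $V_2\subset\mathbb{R}^{d_2}$ be point configurations. Then $\mathrm{Th}(V_1\times V_2)=\max(\mathrm{Th}(V_1),\mathrm{Th}(V_2))$ and $\mathrm{Lev}(V_1\times V_2)=\max(\mathrm{Lev}(V_1),\mathrm{Lev}(V_2))$.
   Context: A point configuration is a finite set $V\subset\mathbb{R}^n$. A linear function means an affine function $\ell(x)=\delta-\langle c,x\rangle$. A linear function $\ell$ nonnegative on $V$ is $k$-sos with respect to $V$ if there are polynomials $h_1,\dots,h_s$ with $\deg h_i\le k$ and $\ell(v)=\sum_i h_i(v)^2$ for all $v\in V$. The Theta rank $\mathrm{Th}(V)$ is the smallest $k\ge0$ such that every linear function nonnegative on $V$ is $k$-sos with respect to $V$. For $\ell$ nonnegative on $V$, $\{v\in V:\ell(v)=0\}$ is a face of $V$; inclusion-maximal faces different from $V$ are facets and the corresponding $\ell$ facet-defining. $V$ is $k$-level if every facet-defining linear function takes at most $k$ distinct values on $V$; the levelness $\mathrm{Lev}(V)$ is the smallest such $k$. *)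

theory Defs
  imports "HOL-Analysis.Analysis"
begin

definition mono_deg :: "('n::finite \<Rightarrow> nat) \<Rightarrow> nat" where
  "mono_deg \<alpha> = (\<Sum>i\<in>UNIV. \<alpha> i)"

definition poly_upto :: "nat \<Rightarrow> (real^'n::finite \<Rightarrow> real) \<Rightarrow> bool" where
  "poly_upto k h \<longleftrightarrow> (\<exists>A c. finite A \<and> (\<forall>\<alpha>\<in>A. mono_deg \<alpha> \<le> k) \<and>
      (\<forall>x. h x = (\<Sum>\<alpha>\<in>A. c \<alpha> * (\<Prod>i\<in>UNIV. (x$i) ^ (\<alpha> i)))))"

definition lin_fun :: "real \<Rightarrow> real^'n::finite \<Rightarrow> real^'n \<Rightarrow> real" where
  "lin_fun \<delta> c = (\<lambda>x. \<delta> - c \<bullet> x)"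

definition nonneg_on :: "(real^'n::finite) set \<Rightarrow> (real^'n \<Rightarrow> real) \<Rightarrow> bool" where
  "nonneg_on V l \<longleftrightarrow> (\<forall>v\<in>V. 0 \<le> l v)"

definition k_sos :: "nat \<Rightarrow> (real^'n::finite) set \<Rightarrow> (real^'n \<Rightarrow> real) \<Rightarrow> bool" where
  "k_sos k V l \<longleftrightarrow> (\<exists>hs. (\<forall>h\<in>set hs. poly_upto k h) \<and>
      (\<forall>v\<in>V. l v = (\<Sum>h\<leftarrow>hs. (h v)^2)))"

definition theta_rank :: "(real^'n::finite) set \<Rightarrow> nat" where
  "theta_rank V = (LEAST k. \<forall>\<delta> c. nonneg_on V (lin_fun \<delta> c) \<longrightarrow> k_sos k V (lin_fun \<delta> c))"

definition is_face :: "(real^'n::finite) set \<Rightarrow> (real^'n) set \<Rightarrow> bool" where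
  "is_face V F \<longleftrightarrow> (\<exists>\<delta> c. nonneg_on V (lin_fun \<delta> c) \<and> F = {v\<in>V. lin_fun \<delta> c v = 0})"

definition is_facet :: "(real^'n::finite) set \<Rightarrow> (real^'n) set \<Rightarrow> bool" where
  "is_facet V F \<longleftrightarrow> is_face V F \<and> F \<noteq> V \<and>
     (\<forall>G. is_face V G \<and> G \<noteq> V \<and> F \<subseteq> G \<longrightarrow> G = F)"

definition facet_defining :: "(real^'n::finite) set \<Rightarrow> real \<Rightarrow> real^'n \<Rightarrow> bool" where
  "facet_defining V \<delta> c \<longleftrightarrow> nonneg_on V (lin_fun \<delta> c) \<and>
     is_facet V {v\<in>V. lin_fun \<delta> c v = 0}"

definition k_level :: "(real^'n::finite) set \<Rightarrow> nat \<Rightarrow> bool" where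
  "k_level V k \<longleftrightarrow> (\<forall>\<delta> c. facet_defining V \<delta> c \<longrightarrow> card (lin_fun \<delta> c ` V) \<le> k)"

definition levelness :: "(real^'n::finite) set \<Rightarrow> nat" where
  "levelness V = (LEAST k. k_level V k)"

definition vec_join :: "real^'n::finite \<Rightarrow> real^'m::finite \<Rightarrow> real^('n + 'm)" where
  "vec_join x y = (\<chi> i. case i of Inl a \<Rightarrow> x$a | Inr b \<Rightarrow> y$b)"

definition prod_config :: "(real^'n::finite) set \<Rightarrow> (real^'m::finite) set \<Rightarrow> (real^('n + 'm)) set" where
  "prod_config V1 V2 = (\<lambda>(x,y). vec_join x y) ` (V1 \<times> V2)"

end

theory Submission
  imports Defs
begin


lemma poly_upto_mono: "poly_upto k h \<Longrightarrow> k \<le> k' \<Longrightarrow> poly_upto k' h"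
  unfolding poly_upto_def by (meson order_trans)

lemma poly_upto_monomial:
  fixes \<beta> :: "'n::finite \<Rightarrow> nat"
  assumes "mono_deg \<beta> \<le> k"
  shows "poly_upto k (\<lambda>x::real^'n. a * (\<Prod>i\<in>UNIV. (x$i)^(\<beta> i)))"
  unfolding poly_upto_def
  by (rule exI[of _ "{\<beta>}"], rule exI[of _ "\<lambda>_. a"]) (use assms in auto)

lemma poly_upto_zero: "poly_upto k (\<lambda>x. 0)"
  unfolding poly_upto_def by (rule exI[of _ "{}"]) auto

lemma poly_upto_add:
  assumes "poly_upto k f" "poly_upto k g"
  shows "poly_upto k (\<lambda>x. f x + g x)"
proof -
  obtain A c where A: "finite A" "\<forall>\<alpha>\<in>A. mono_deg \<alpha> \<le> k"
    "\<forall>x. f x = (\<Sum>\<alpha>\<in>A. c \<alpha> * (\<Prod>i\<in>UNIV. (x$i) ^ (\<alpha> i)))"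
    using assms(1) unfolding poly_upto_def by blast
  obtain B d where B: "finite B" "\<forall>\<alpha>\<in>B. mono_deg \<alpha> \<le> k"
    "\<forall>x. g x = (\<Sum>\<alpha>\<in>B. d \<alpha> * (\<Prod>i\<in>UNIV. (x$i) ^ (\<alpha> i)))"
    using assms(2) unfolding poly_upto_def by blast
  let ?e = "\<lambda>\<alpha>. (if \<alpha> \<in> A then c \<alpha> else 0) + (if \<alpha> \<in> B then d \<alpha> else 0)"
  show ?thesis unfolding poly_upto_def
  proof (intro exI conjI allI)
    show "finite (A \<union> B)" using A B by auto
    show "\<forall>\<alpha>\<in>A \<union> B. mono_deg \<alpha> \<le> k" using A B by auto
    fix x :: "real^'a"
    let ?m = "\<lambda>\<alpha>. (\<Prod>i\<in>UNIV. (x$i) ^ (\<alpha> i))"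
    have "(\<Sum>\<alpha>\<in>A \<union> B. ?e \<alpha> * ?m \<alpha>) =
      (\<Sum>\<alpha>\<in>A \<union> B. (if \<alpha> \<in> A then c \<alpha> * ?m \<alpha> else 0)) + (\<Sum>\<alpha>\<in>A \<union> B. (if \<alpha> \<in> B then d \<alpha> * ?m \<alpha> else 0))"
      unfolding sum.distrib[symmetric] by (rule sum.cong) (auto simp: algebra_simps)
    also have "\<dots> = (\<Sum>\<alpha>\<in>(A \<union> B) \<inter> A. c \<alpha> * ?m \<alpha>) + (\<Sum>\<alpha>\<in>(A \<union> B) \<inter> B. d \<alpha> * ?m \<alpha>)"
      using A B by (simp only: sum.inter_restrict[symmetric] finite_Un)
    also have "\<dots> = f x + g x" using A B by (simp add: Int_absorb1)
    finally show "f x + g x = (\<Sum>\<alpha>\<in>A \<union> B. ?e \<alpha> * ?m \<alpha>)" by simp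
  qed
qed

lemma poly_upto_sum:
  assumes "finite S" "\<And>s. s \<in> S \<Longrightarrow> poly_upto k (f s)"
  shows "poly_upto k (\<lambda>x. \<Sum>s\<in>S. f s x)"
  using assms
proof (induction S rule: finite_induct)
  case empty then show ?case by (simp add: poly_upto_zero)
next
  case (insert a S)
  then show ?case using poly_upto_add[of k "f a" "\<lambda>x. \<Sum>s\<in>S. f s x"] by simp
qed

lemma poly_upto_repr:
  assumes "poly_upto k h"
  obtains A c where "finite A" "\<forall>\<alpha>\<in>A. mono_deg \<alpha> \<le> k"
    "\<And>x. h x = (\<Sum>\<alpha>\<in>A. c \<alpha> * (\<Prod>i\<in>UNIV. (x$i) ^ (\<alpha> i)))"
  using assms unfolding poly_upto_def by blast

lemma poly_upto_scale:
  assumes "poly_upto k h" shows "poly_upto k (\<lambda>x. a * h x)"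
proof -
  obtain A c where A: "finite A" "\<forall>\<alpha>\<in>A. mono_deg \<alpha> \<le> k"
    "\<And>x. h x = (\<Sum>\<alpha>\<in>A. c \<alpha> * (\<Prod>i\<in>UNIV. (x$i) ^ (\<alpha> i)))"
    using poly_upto_repr[OF assms] by blast
  have eq: "a * h x = (\<Sum>\<alpha>\<in>A. (a * c \<alpha>) * (\<Prod>i\<in>UNIV. (x$i) ^ (\<alpha> i)))" for x
    unfolding A(3) by (simp add: sum_distrib_left mult.assoc)
  show ?thesis unfolding eq
    by (rule poly_upto_sum[OF A(1)]) (use A(2) poly_upto_monomial in auto)
qed

lemma poly_upto_mult:
  assumes "poly_upto k f" "poly_upto j g"
  shows "poly_upto (k + j) (\<lambda>x. f x * g x)"
proof -
  obtain A c where A: "finite A" "\<forall>\<alpha>\<in>A. mono_deg \<alpha> \<le> k"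
    "\<And>x. f x = (\<Sum>\<alpha>\<in>A. c \<alpha> * (\<Prod>i\<in>UNIV. (x$i) ^ (\<alpha> i)))"
    using poly_upto_repr[OF assms(1)] by blast
  obtain B d where B: "finite B" "\<forall>\<alpha>\<in>B. mono_deg \<alpha> \<le> j"
    "\<And>x. g x = (\<Sum>\<alpha>\<in>B. d \<alpha> * (\<Prod>i\<in>UNIV. (x$i) ^ (\<alpha> i)))"
    using poly_upto_repr[OF assms(2)] by blast
  have eq: "f x * g x = (\<Sum>\<alpha>\<in>A. \<Sum>\<beta>\<in>B. (c \<alpha> * d \<beta>) * (\<Prod>i\<in>UNIV. (x$i) ^ ((\<lambda>i. \<alpha> i + \<beta> i) i)))" for x
    unfolding A(3) B(3) sum_product
    by (simp add: power_add prod.distrib mult_ac)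
  show ?thesis unfolding eq
  proof (intro poly_upto_sum A(1) B(1))
    fix \<alpha> \<beta> assume "\<alpha> \<in> A" "\<beta> \<in> B"
    then have "mono_deg (\<lambda>i. \<alpha> i + \<beta> i) \<le> k + j"
      using A(2) B(2) by (auto simp: mono_deg_def sum.distrib intro: add_mono)
    then show "poly_upto (k + j) (\<lambda>x. c \<alpha> * d \<beta> * (\<Prod>i\<in>UNIV. x $ i ^ (\<alpha> i + \<beta> i)))"
      by (rule poly_upto_monomial)
  qed
qed

lemma poly_upto_const: "poly_upto k (\<lambda>x::real^'n::finite. a)"
  using poly_upto_monomial[of "\<lambda>_::'n. 0" k a] by (simp add: mono_deg_def)

lemma poly_upto_coord: "poly_upto 1 (\<lambda>x::real^'n::finite. x$i)"
proof -
  have "mono_deg (\<lambda>j::'n. if j = i then 1 else 0) \<le> 1" by (simp add: mono_deg_def)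
  from poly_upto_monomial[OF this, of 1] show ?thesis
    by (simp add: if_distrib[of "\<lambda>e. _ ^ e"] prod.delta cong: if_cong)
qed




lemma sum_UNIV_Plus: "(\<Sum>i\<in>(UNIV::('a::finite + 'b::finite) set). g i) = (\<Sum>a\<in>UNIV. g (Inl a)) + (\<Sum>b\<in>UNIV. g (Inr b))"
  using sum.Plus[of "UNIV::'a set" "UNIV::'b set" g] by (simp add: o_def)

lemma prod_UNIV_Plus: "(\<Prod>i\<in>(UNIV::('a::finite + 'b::finite) set). g i) = (\<Prod>a\<in>UNIV. g (Inl a)) * (\<Prod>b\<in>UNIV. g (Inr b))"
  using prod.Plus[of "UNIV::'a set" "UNIV::'b set" g] by (simp add: o_def)

definition pr1 :: "real^('n::finite + 'm::finite) \<Rightarrow> real^'n" where "pr1 z = (\<chi> a. z$Inl a)"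
definition pr2 :: "real^('n::finite + 'm::finite) \<Rightarrow> real^'m" where "pr2 z = (\<chi> b. z$Inr b)"

lemma join_nth[simp]: "vec_join x y $ Inl a = x$a" "vec_join x y $ Inr b = y$b"
  by (simp_all add: vec_join_def)

lemma pr_join[simp]: "pr1 (vec_join x y) = x" "pr2 (vec_join x y) = y"
  by (simp_all add: pr1_def pr2_def vec_eq_iff)

lemma join_pr: "vec_join (pr1 z) (pr2 z) = z"
  by (simp add: vec_eq_iff pr1_def pr2_def vec_join_def split: sum.split)

lemma join_eq_iff[simp]: "vec_join x y = vec_join x' y' \<longleftrightarrow> x = x' \<and> y = y'"
  by (metis pr_join)

lemma inner_join: "vec_join a b \<bullet> vec_join x y = a \<bullet> x + b \<bullet> y"
  by (simp add: inner_vec_def sum_UNIV_Plus)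

lemma mem_prod_config: "z \<in> prod_config V1 V2 \<longleftrightarrow> (\<exists>x\<in>V1. \<exists>y\<in>V2. z = vec_join x y)"
  by (auto simp: prod_config_def)

lemma join_mem_prod_config[simp]: "vec_join x y \<in> prod_config V1 V2 \<longleftrightarrow> x \<in> V1 \<and> y \<in> V2"
  by (auto simp: prod_config_def)

lemma lin_join: "lin_fun \<delta> c (vec_join x y) = lin_fun \<delta>1 (pr1 c) x + lin_fun (\<delta> - \<delta>1) (pr2 c) y"
proof -
  have "c \<bullet> vec_join x y = pr1 c \<bullet> x + pr2 c \<bullet> y"
    using inner_join[of "pr1 c" "pr2 c" x y] by (simp add: join_pr)
  then show ?thesis by (simp add: lin_fun_def)
qed

lemma lin_lift1: "lin_fun \<delta> (vec_join c 0) (vec_join x y) = lin_fun \<delta> c x"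
  by (simp add: lin_fun_def inner_join)
lemma lin_lift2: "lin_fun \<delta> (vec_join 0 c) (vec_join x y) = lin_fun \<delta> c y"
  by (simp add: lin_fun_def inner_join)

lemma mono_deg_Plus: "mono_deg \<alpha> = mono_deg (\<lambda>a. \<alpha> (Inl a)) + mono_deg (\<lambda>b. \<alpha> (Inr b))"
  by (simp add: mono_deg_def sum_UNIV_Plus)

lemma poly_upto_pr1:
  assumes "poly_upto k h" shows "poly_upto k (\<lambda>z::real^('n::finite+'m::finite). h (pr1 z))"
proof -
  obtain A c where A: "finite A" "\<forall>\<alpha>\<in>A. mono_deg \<alpha> \<le> k"
    "\<And>x. h x = (\<Sum>\<alpha>\<in>A. c \<alpha> * (\<Prod>i\<in>UNIV. (x$i) ^ (\<alpha> i)))"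
    using poly_upto_repr[OF assms] by blast
  have eq: "h (pr1 z) = (\<Sum>\<alpha>\<in>A. c \<alpha> * (\<Prod>i\<in>UNIV. (z$i) ^ ((case_sum \<alpha> (\<lambda>_. 0)) i)))" for z
    unfolding A(3) by (simp add: prod_UNIV_Plus pr1_def)
  show ?thesis unfolding eq
  proof (intro poly_upto_sum A(1) poly_upto_monomial)
    fix \<alpha> assume "\<alpha> \<in> A" then show "mono_deg (case_sum \<alpha> (\<lambda>_. 0)) \<le> k"
      using A(2) by (simp add: mono_deg_def sum_UNIV_Plus)
  qed
qed

lemma poly_upto_pr2:
  assumes "poly_upto k h" shows "poly_upto k (\<lambda>z::real^('n::finite+'m::finite). h (pr2 z))"
proof -
  obtain A c where A: "finite A" "\<forall>\<alpha>\<in>A. mono_deg \<alpha> \<le> k"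
    "\<And>x. h x = (\<Sum>\<alpha>\<in>A. c \<alpha> * (\<Prod>i\<in>UNIV. (x$i) ^ (\<alpha> i)))"
    using poly_upto_repr[OF assms] by blast
  have eq: "h (pr2 z) = (\<Sum>\<alpha>\<in>A. c \<alpha> * (\<Prod>i\<in>UNIV. (z$i) ^ ((case_sum (\<lambda>_. 0) \<alpha>) i)))" for z
    unfolding A(3) by (simp add: prod_UNIV_Plus pr2_def)
  show ?thesis unfolding eq
  proof (intro poly_upto_sum A(1) poly_upto_monomial)
    fix \<alpha> assume "\<alpha> \<in> A" then show "mono_deg (case_sum (\<lambda>_. 0) \<alpha>) \<le> k"
      using A(2) by (simp add: mono_deg_def sum_UNIV_Plus)
  qed
qed

lemma poly_upto_sub1:
  assumes "poly_upto k (h :: real^('n::finite+'m::finite) \<Rightarrow> real)"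
  shows "poly_upto k (\<lambda>x. h (vec_join x p))"
proof -
  obtain A c where A: "finite A" "\<forall>\<alpha>\<in>A. mono_deg \<alpha> \<le> k"
    "\<And>x. h x = (\<Sum>\<alpha>\<in>A. c \<alpha> * (\<Prod>i\<in>UNIV. (x$i) ^ (\<alpha> i)))"
    using poly_upto_repr[OF assms] by blast
  have eq: "h (vec_join x p) = (\<Sum>\<alpha>\<in>A. (c \<alpha> * (\<Prod>b\<in>UNIV. (p$b) ^ (\<alpha> (Inr b)))) * (\<Prod>a\<in>UNIV. (x$a) ^ (\<alpha> (Inl a))))" for x
    unfolding A(3) by (simp add: prod_UNIV_Plus mult_ac)
  show ?thesis unfolding eq
  proof (intro poly_upto_sum A(1) poly_upto_monomial)
    fix \<alpha> assume "\<alpha> \<in> A" then show "mono_deg (\<lambda>a. \<alpha> (Inl a)) \<le> k"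
      using A(2) mono_deg_Plus[of \<alpha>] by fastforce
  qed
qed

lemma poly_upto_sub2:
  assumes "poly_upto k (h :: real^('n::finite+'m::finite) \<Rightarrow> real)"
  shows "poly_upto k (\<lambda>y. h (vec_join p y))"
proof -
  obtain A c where A: "finite A" "\<forall>\<alpha>\<in>A. mono_deg \<alpha> \<le> k"
    "\<And>x. h x = (\<Sum>\<alpha>\<in>A. c \<alpha> * (\<Prod>i\<in>UNIV. (x$i) ^ (\<alpha> i)))"
    using poly_upto_repr[OF assms] by blast
  have eq: "h (vec_join p y) = (\<Sum>\<alpha>\<in>A. (c \<alpha> * (\<Prod>a\<in>UNIV. (p$a) ^ (\<alpha> (Inl a)))) * (\<Prod>b\<in>UNIV. (y$b) ^ (\<alpha> (Inr b))))" for y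
    unfolding A(3) by (simp add: prod_UNIV_Plus mult_ac)
  show ?thesis unfolding eq
  proof (intro poly_upto_sum A(1) poly_upto_monomial)
    fix \<alpha> assume "\<alpha> \<in> A" then show "mono_deg (\<lambda>b. \<alpha> (Inr b)) \<le> k"
      using A(2) mono_deg_Plus[of \<alpha>] by fastforce
  qed
qed




lemma separator:
  fixes W :: "(real^'n::finite) set"
  assumes "finite W" "w \<notin> W"
  shows "\<exists>q. poly_upto (card W) q \<and> q w = 1 \<and> (\<forall>u\<in>W. q u = 0)"
  using assms
proof (induction W rule: finite_induct)
  case empty then show ?case using poly_upto_const[of 0 1] by auto
next
  case (insert u W)
  then obtain q where q: "poly_upto (card W) q" "q w = 1" "\<forall>u\<in>W. q u = 0" by auto
  from insert have "u \<noteq> w" by auto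
  then obtain i where i: "u$i \<noteq> w$i" by (auto simp: vec_eq_iff)
  define r where "r = (\<lambda>x::real^'n. (1/(w$i-u$i)) * x$i + (-(u$i)/(w$i-u$i)))"
  have r: "poly_upto 1 r" unfolding r_def
    by (intro poly_upto_add poly_upto_scale poly_upto_coord poly_upto_const)
  have nz: "w$i - u$i \<noteq> 0" using i by simp
  have re: "r x = (x$i - u$i) / (w$i - u$i)" for x unfolding r_def by (simp add: diff_divide_distrib)
  have rw: "r w = 1" using nz unfolding re by simp
  have ru: "r u = 0" unfolding re by simp
  have "poly_upto (card W + 1) (\<lambda>x. q x * r x)" by (rule poly_upto_mult[OF q(1) r])
  then show ?case using insert q rw ru by (auto intro!: exI[of _ "\<lambda>x. q x * r x"])
qed

lemma interpolate:
  fixes V :: "(real^'n::finite) set"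
  assumes "finite V"
  shows "\<exists>h. poly_upto (card V) h \<and> (\<forall>v\<in>V. h v = f v)"
proof -
  have "\<forall>v\<in>V. \<exists>q. poly_upto (card V) q \<and> q v = 1 \<and> (\<forall>u\<in>V-{v}. q u = 0)"
  proof
    fix v assume "v \<in> V"
    from separator[of "V - {v}" v] assms obtain q where
      "poly_upto (card (V-{v})) q" "q v = 1" "\<forall>u\<in>V-{v}. q u = 0" by auto
    moreover have "card (V-{v}) \<le> card V" using assms by (simp add: card_mono)
    ultimately show "\<exists>q. poly_upto (card V) q \<and> q v = 1 \<and> (\<forall>u\<in>V-{v}. q u = 0)"
      using poly_upto_mono by blast
  qed
  then obtain Q where Q: "\<forall>v\<in>V. poly_upto (card V) (Q v) \<and> Q v v = 1 \<and> (\<forall>u\<in>V-{v}. Q v u = 0)"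
    by metis
  define h where "h = (\<lambda>x. \<Sum>u\<in>V. f u * Q u x)"
  have "poly_upto (card V) h" unfolding h_def
    using Q by (intro poly_upto_sum assms poly_upto_scale) auto
  moreover have "h v = f v" if "v \<in> V" for v
  proof -
    have "h v = f v * Q v v + (\<Sum>u\<in>V-{v}. f u * Q u v)"
      unfolding h_def using assms that by (simp add: sum.remove)
    also have "(\<Sum>u\<in>V-{v}. f u * Q u v) = 0" using Q that by (intro sum.neutral) auto
    finally show ?thesis using Q that by simp
  qed
  ultimately show ?thesis by blast
qed

definition thetaP :: "(real^'n::finite) set \<Rightarrow> nat \<Rightarrow> bool" where
  "thetaP V k \<longleftrightarrow> (\<forall>\<delta> c. nonneg_on V (lin_fun \<delta> c) \<longrightarrow> k_sos k V (lin_fun \<delta> c))"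

lemma theta_rank_eq: "theta_rank V = (LEAST k. thetaP V k)"
  unfolding theta_rank_def thetaP_def ..

lemma thetaP_card: assumes "finite V" shows "thetaP V (card V)"
  unfolding thetaP_def
proof (intro allI impI)
  fix \<delta> c assume nn: "nonneg_on V (lin_fun \<delta> c)"
  obtain h where h: "poly_upto (card V) h" "\<forall>v\<in>V. h v = sqrt (lin_fun \<delta> c v)"
    using interpolate[OF assms, of "\<lambda>v. sqrt (lin_fun \<delta> c v)"] by blast
  show "k_sos (card V) V (lin_fun \<delta> c)" unfolding k_sos_def
    by (rule exI[of _ "[h]"]) (use h nn in \<open>auto simp: nonneg_on_def\<close>)
qed

lemma thetaP_mono: "thetaP V k \<Longrightarrow> k \<le> k' \<Longrightarrow> thetaP V k'"
  unfolding thetaP_def k_sos_def by (meson poly_upto_mono)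

lemma decomp:
  assumes "finite V1" "V1 \<noteq> {}" "nonneg_on (prod_config V1 V2) (lin_fun \<delta> c)"
  shows "\<exists>\<delta>1. nonneg_on V1 (lin_fun \<delta>1 (pr1 c)) \<and> nonneg_on V2 (lin_fun (\<delta>-\<delta>1) (pr2 c))
     \<and> (\<exists>x\<in>V1. lin_fun \<delta>1 (pr1 c) x = 0)"
proof -
  define \<delta>1 where "\<delta>1 = Max ((\<lambda>x. pr1 c \<bullet> x) ` V1)"
  have n1: "nonneg_on V1 (lin_fun \<delta>1 (pr1 c))"
    using assms unfolding nonneg_on_def lin_fun_def \<delta>1_def by simp
  have "\<delta>1 \<in> (\<lambda>x. pr1 c \<bullet> x) ` V1" unfolding \<delta>1_def using assms by (intro Max_in) auto
  then obtain x0 where x0: "x0 \<in> V1" "pr1 c \<bullet> x0 = \<delta>1" by auto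
  have z: "lin_fun \<delta>1 (pr1 c) x0 = 0" using x0 by (simp add: lin_fun_def)
  have "nonneg_on V2 (lin_fun (\<delta>-\<delta>1) (pr2 c))"
    unfolding nonneg_on_def
  proof
    fix y assume "y \<in> V2"
    then have "0 \<le> lin_fun \<delta> c (vec_join x0 y)" using assms(3) x0 by (simp add: nonneg_on_def)
    then show "0 \<le> lin_fun (\<delta>-\<delta>1) (pr2 c) y" using lin_join[of \<delta> c x0 y \<delta>1] z by simp
  qed
  then show ?thesis using n1 z x0 by blast
qed

lemma thetaP_prod:
  assumes "finite V1" "V1 \<noteq> {}" "finite V2" "V2 \<noteq> {}"
  shows "thetaP (prod_config V1 V2) k \<longleftrightarrow> thetaP V1 k \<and> thetaP V2 k"
proof safe
  assume T: "thetaP (prod_config V1 V2) k"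
  obtain p where p: "p \<in> V2" using assms by auto
  obtain q where q: "q \<in> V1" using assms by auto
  show "thetaP V1 k" unfolding thetaP_def
  proof (intro allI impI)
    fix \<delta> c assume nn: "nonneg_on V1 (lin_fun \<delta> c)"
    have "nonneg_on (prod_config V1 V2) (lin_fun \<delta> (vec_join c 0))"
      using nn by (auto simp: nonneg_on_def mem_prod_config lin_lift1)
    then obtain hs where hs: "\<forall>h\<in>set hs. poly_upto k h"
      "\<forall>z\<in>prod_config V1 V2. lin_fun \<delta> (vec_join c 0) z = (\<Sum>h\<leftarrow>hs. (h z)^2)"
      using T unfolding thetaP_def k_sos_def by blast
    show "k_sos k V1 (lin_fun \<delta> c)" unfolding k_sos_def
    proof (intro exI[of _ "map (\<lambda>h x. h (vec_join x p)) hs"] conjI ballI)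
      show "poly_upto k g" if "g \<in> set (map (\<lambda>h x. h (vec_join x p)) hs)" for g
        using that hs(1) poly_upto_sub1 by auto
      fix v assume "v \<in> V1"
      then show "lin_fun \<delta> c v = (\<Sum>h\<leftarrow>map (\<lambda>h x. h (vec_join x p)) hs. (h v)^2)"
        using hs(2)[rule_format, of "vec_join v p"] p by (simp add: lin_lift1 o_def)
    qed
  qed
  show "thetaP V2 k" unfolding thetaP_def
  proof (intro allI impI)
    fix \<delta> c assume nn: "nonneg_on V2 (lin_fun \<delta> c)"
    have "nonneg_on (prod_config V1 V2) (lin_fun \<delta> (vec_join 0 c))"
      using nn by (auto simp: nonneg_on_def mem_prod_config lin_lift2)
    then obtain hs where hs: "\<forall>h\<in>set hs. poly_upto k h"
      "\<forall>z\<in>prod_config V1 V2. lin_fun \<delta> (vec_join 0 c) z = (\<Sum>h\<leftarrow>hs. (h z)^2)"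
      using T unfolding thetaP_def k_sos_def by blast
    show "k_sos k V2 (lin_fun \<delta> c)" unfolding k_sos_def
    proof (intro exI[of _ "map (\<lambda>h y. h (vec_join q y)) hs"] conjI ballI)
      show "poly_upto k g" if "g \<in> set (map (\<lambda>h y. h (vec_join q y)) hs)" for g
        using that hs(1) poly_upto_sub2 by auto
      fix v assume "v \<in> V2"
      then show "lin_fun \<delta> c v = (\<Sum>h\<leftarrow>map (\<lambda>h y. h (vec_join q y)) hs. (h v)^2)"
        using hs(2)[rule_format, of "vec_join q v"] q by (simp add: lin_lift2 o_def)
    qed
  qed
next
  assume T1: "thetaP V1 k" and T2: "thetaP V2 k"
  show "thetaP (prod_config V1 V2) k" unfolding thetaP_def
  proof (intro allI impI)
    fix \<delta> c assume nn: "nonneg_on (prod_config V1 V2) (lin_fun \<delta> c)"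
    obtain \<delta>1 where d: "nonneg_on V1 (lin_fun \<delta>1 (pr1 c))" "nonneg_on V2 (lin_fun (\<delta>-\<delta>1) (pr2 c))"
      using decomp[OF assms(1,2) nn] by blast
    obtain hs1 where hs1: "\<forall>h\<in>set hs1. poly_upto k h"
      "\<forall>v\<in>V1. lin_fun \<delta>1 (pr1 c) v = (\<Sum>h\<leftarrow>hs1. (h v)^2)"
      using T1 d(1) unfolding thetaP_def k_sos_def by blast
    obtain hs2 where hs2: "\<forall>h\<in>set hs2. poly_upto k h"
      "\<forall>v\<in>V2. lin_fun (\<delta>-\<delta>1) (pr2 c) v = (\<Sum>h\<leftarrow>hs2. (h v)^2)"
      using T2 d(2) unfolding thetaP_def k_sos_def by blast
    show "k_sos k (prod_config V1 V2) (lin_fun \<delta> c)" unfolding k_sos_def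
    proof (intro exI[of _ "map (\<lambda>h z. h (pr1 z)) hs1 @ map (\<lambda>h z. h (pr2 z)) hs2"] conjI ballI)
      show "poly_upto k g" if "g \<in> set (map (\<lambda>h z. h (pr1 z)) hs1 @ map (\<lambda>h z. h (pr2 z)) hs2)" for g
        using that hs1(1) hs2(1) by (auto intro: poly_upto_pr1 poly_upto_pr2)
      fix z assume "z \<in> prod_config V1 V2"
      then obtain x y where xy: "x \<in> V1" "y \<in> V2" "z = vec_join x y" by (auto simp: mem_prod_config)
      show "lin_fun \<delta> c z = (\<Sum>h\<leftarrow>map (\<lambda>h z. h (pr1 z)) hs1 @ map (\<lambda>h z. h (pr2 z)) hs2. (h z)^2)"
        using xy hs1(2) hs2(2) lin_join[of \<delta> c x y \<delta>1] by (simp add: o_def)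
    qed
  qed
qed

lemma Least_conj_max:
  assumes mA: "\<And>k k'. A k \<Longrightarrow> k \<le> k' \<Longrightarrow> A k'" and mB: "\<And>k k'. B k \<Longrightarrow> k \<le> k' \<Longrightarrow> B k'"
    and "A a" "B b"
  shows "(LEAST k::nat. A k \<and> B k) = max (LEAST k. A k) (LEAST k. B k)"
proof (rule Least_equality)
  have "A (LEAST k. A k)" "B (LEAST k. B k)" using assms by (auto intro: LeastI)
  then show "A (max (LEAST k. A k) (LEAST k. B k)) \<and> B (max (LEAST k. A k) (LEAST k. B k))"
    using mA mB by (meson max.cobounded1 max.cobounded2)
next
  fix y assume "A y \<and> B y"
  then show "max (LEAST k. A k) (LEAST k. B k) \<le> y" by (simp add: Least_le)
qed




lemma prod_config_empty[simp]: "prod_config A B = {} \<longleftrightarrow> A = {} \<or> B = {}"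
  by (auto simp: prod_config_def)

lemma prod_config_subset:
  assumes "A \<noteq> {}" "B \<noteq> {}" "prod_config A B \<subseteq> prod_config C D"
  shows "A \<subseteq> C \<and> B \<subseteq> D"
proof -
  obtain a b where ab: "a \<in> A" "b \<in> B" using assms by auto
  have "x \<in> C" if "x \<in> A" for x
  proof -
    have "vec_join x b \<in> prod_config A B" using that ab by simp
    then have "vec_join x b \<in> prod_config C D" using assms(3) by blast
    then show ?thesis by simp
  qed
  moreover have "y \<in> D" if "y \<in> B" for y
  proof -
    have "vec_join a y \<in> prod_config A B" using that ab by simp
    then have "vec_join a y \<in> prod_config C D" using assms(3) by blast
    then show ?thesis by simp
  qed
  ultimately show ?thesis by auto
qed

lemma prod_config_mono: "A \<subseteq> C \<Longrightarrow> B \<subseteq> D \<Longrightarrow> prod_config A B \<subseteq> prod_config C D"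
  by (auto simp: prod_config_def)

lemma prod_config_eq:
  assumes "A \<noteq> {}" "B \<noteq> {}" "prod_config A B = prod_config C D"
  shows "A = C \<and> B = D"
proof -
  have "C \<noteq> {}" "D \<noteq> {}" using assms by (metis prod_config_empty)+
  then show ?thesis using prod_config_subset assms by (metis equalityI order_refl)
qed

lemma image_P1: "V2 \<noteq> {} \<Longrightarrow> (\<And>x y. x\<in>V1 \<Longrightarrow> y\<in>V2 \<Longrightarrow> f (vec_join x y) = g x) \<Longrightarrow> f ` prod_config V1 V2 = g ` V1"
  unfolding prod_config_def by (auto simp: image_iff)

lemma image_P2: "V1 \<noteq> {} \<Longrightarrow> (\<And>x y. x\<in>V1 \<Longrightarrow> y\<in>V2 \<Longrightarrow> f (vec_join x y) = g y) \<Longrightarrow> f ` prod_config V1 V2 = g ` V2"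
  unfolding prod_config_def by (auto simp: image_iff)

lemma face_subset: "is_face V F \<Longrightarrow> F \<subseteq> V"
  unfolding is_face_def by auto

lemma empty_face: "is_face V {}"
  unfolding is_face_def by (rule exI[of _ 1], rule exI[of _ 0]) (auto simp: nonneg_on_def lin_fun_def)

lemma facet_exists:
  assumes "finite V" "V \<noteq> {}"
  shows "\<exists>F. is_facet V F"
proof -
  let ?S = "{F. is_face V F \<and> F \<noteq> V}"
  have "{} \<in> ?S" using empty_face assms by auto
  moreover have "\<forall>F. F \<in> ?S \<longrightarrow> card F < Suc (card V)"
  proof (intro allI impI)
    fix F assume "F \<in> ?S"
    then have "F \<subseteq> V" using face_subset by blast
    then show "card F < Suc (card V)" using assms(1) card_mono le_imp_less_Suc by blast
  qed
  ultimately obtain F where F: "F \<in> ?S" "\<forall>G. G \<in> ?S \<longrightarrow> card G \<le> card F"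
    using Lattices_Big.ex_has_greatest_nat[of "\<lambda>F. F \<in> ?S" "{}" card "Suc (card V)"] by blast
  have "is_facet V F" unfolding is_facet_def
  proof (intro conjI allI impI)
    show "is_face V F" "F \<noteq> V" using F(1) by auto
    fix G assume G: "is_face V G \<and> G \<noteq> V \<and> F \<subseteq> G"
    have fG: "finite G" using face_subset[of V G] G assms(1) finite_subset by blast
    have le: "card G \<le> card F" using F(2) G by blast
    have "card F \<le> card G" using card_mono[OF fG] G by blast
    then have "card F = card G" using le by simp
    then show "G = F" using card_subset_eq[OF fG, of F] G by blast
  qed
  then show ?thesis by blast
qed

lemma facet_defining_of_facet:
  assumes "is_facet V F" shows "\<exists>\<delta> c. facet_defining V \<delta> c \<and> F = {v\<in>V. lin_fun \<delta> c v = 0}"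
proof -
  from assms have "is_face V F" by (simp add: is_facet_def)
  then obtain \<delta> c where d: "nonneg_on V (lin_fun \<delta> c)" "F = {v\<in>V. lin_fun \<delta> c v = 0}"
    unfolding is_face_def by blast
  then have "facet_defining V \<delta> c" using assms unfolding facet_defining_def by simp
  then show ?thesis using d by blast
qed

lemma k_level_pos:
  assumes "finite V" "V \<noteq> {}" "k_level V k" shows "1 \<le> k"
proof -
  obtain F where "is_facet V F" using facet_exists assms by blast
  then obtain \<delta> c where "facet_defining V \<delta> c" using facet_defining_of_facet by blast
  then have "card (lin_fun \<delta> c ` V) \<le> k" using assms unfolding k_level_def by blast
  moreover have "card (lin_fun \<delta> c ` V) \<ge> 1" using assms
    by (simp add: Suc_leI card_gt_0_iff)
  ultimately show ?thesis by simp
qed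

lemma empty_facet_singleton:
  assumes "finite V" "is_facet V {}"
  shows "\<exists>v. V = {v}"
proof (rule ccontr)
  assume ns: "\<nexists>v. V = {v}"
  have "V \<noteq> {}" using assms unfolding is_facet_def by auto
  then obtain u w where uw: "u \<in> V" "w \<in> V" "u \<noteq> w" using ns by blast
  then obtain i where i: "u$i \<noteq> w$i" by (auto simp: vec_eq_iff)
  define c :: "real^'a" where "c = (\<chi> j. if j = i then 1 else 0)"
  have ci: "c \<bullet> x = x$i" for x
    unfolding c_def inner_vec_def by (simp add: if_distrib[of "\<lambda>t. t * _"] cong: if_cong)
  define M where "M = Max ((\<lambda>x. x$i) ` V)"
  let ?G = "{v\<in>V. lin_fun M c v = 0}"
  have nn: "nonneg_on V (lin_fun M c)"
    unfolding nonneg_on_def lin_fun_def ci M_def using assms by simp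
  then have face: "is_face V ?G" unfolding is_face_def by blast
  have "M \<in> (\<lambda>x. x$i) ` V" unfolding M_def using assms \<open>V \<noteq> {}\<close> by (intro Max_in) auto
  then have ne: "?G \<noteq> {}" by (auto simp: lin_fun_def ci)
  have "u \<notin> ?G \<or> w \<notin> ?G" using i by (auto simp: lin_fun_def ci)
  then have "?G \<noteq> V" using uw by auto
  then have "?G = {}" using assms face unfolding is_facet_def by blast
  then show False using ne by simp
qed

lemma k_level_mono: "k_level V k \<Longrightarrow> k \<le> k' \<Longrightarrow> k_level V k'"
  unfolding k_level_def using order_trans by blast

lemma k_level_card: "finite V \<Longrightarrow> k_level V (card V)"
  unfolding k_level_def by (simp add: card_image_le)




lemma zero_lift1: "{z \<in> prod_config V1 V2. lin_fun \<delta> (vec_join c 0) z = 0} = prod_config {x\<in>V1. lin_fun \<delta> c x = 0} V2"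
  by (auto simp: mem_prod_config lin_lift1)
lemma zero_lift2: "{z \<in> prod_config V1 V2. lin_fun \<delta> (vec_join 0 c) z = 0} = prod_config V1 {y\<in>V2. lin_fun \<delta> c y = 0}"
  by (auto simp: mem_prod_config lin_lift2)
lemma nonneg_lift1: "nonneg_on V1 (lin_fun \<delta> c) \<Longrightarrow> nonneg_on (prod_config V1 V2) (lin_fun \<delta> (vec_join c 0))"
  by (auto simp: nonneg_on_def mem_prod_config lin_lift1)
lemma nonneg_lift2: "nonneg_on V2 (lin_fun \<delta> c) \<Longrightarrow> nonneg_on (prod_config V1 V2) (lin_fun \<delta> (vec_join 0 c))"
  by (auto simp: nonneg_on_def mem_prod_config lin_lift2)

lemma face_lift1: "is_face V1 G \<Longrightarrow> is_face (prod_config V1 V2) (prod_config G V2)"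
proof -
  assume "is_face V1 G"
  then obtain \<delta> c where d: "nonneg_on V1 (lin_fun \<delta> c)" "G = {v\<in>V1. lin_fun \<delta> c v = 0}"
    unfolding is_face_def by blast
  show ?thesis unfolding is_face_def
    by (rule exI[of _ \<delta>], rule exI[of _ "(vec_join c 0)"]) (simp add: d nonneg_lift1 zero_lift1)
qed
lemma face_lift2: "is_face V2 G \<Longrightarrow> is_face (prod_config V1 V2) (prod_config V1 G)"
proof -
  assume "is_face V2 G"
  then obtain \<delta> c where d: "nonneg_on V2 (lin_fun \<delta> c)" "G = {v\<in>V2. lin_fun \<delta> c v = 0}"
    unfolding is_face_def by blast
  show ?thesis unfolding is_face_def
    by (rule exI[of _ \<delta>], rule exI[of _ "(vec_join 0 c)"]) (simp add: d nonneg_lift2 zero_lift2)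
qed

lemma face_decomp:
  assumes "finite V1" "V1 \<noteq> {}" "nonneg_on (prod_config V1 V2) (lin_fun \<delta> c)"
  shows "\<exists>\<delta>1. nonneg_on V1 (lin_fun \<delta>1 (pr1 c)) \<and> nonneg_on V2 (lin_fun (\<delta>-\<delta>1) (pr2 c))
     \<and> {x\<in>V1. lin_fun \<delta>1 (pr1 c) x = 0} \<noteq> {}
     \<and> {z\<in>prod_config V1 V2. lin_fun \<delta> c z = 0} =
        prod_config {x\<in>V1. lin_fun \<delta>1 (pr1 c) x = 0} {y\<in>V2. lin_fun (\<delta>-\<delta>1) (pr2 c) y = 0}"
proof -
  obtain \<delta>1 where d: "nonneg_on V1 (lin_fun \<delta>1 (pr1 c))" "nonneg_on V2 (lin_fun (\<delta>-\<delta>1) (pr2 c))"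
     "\<exists>x\<in>V1. lin_fun \<delta>1 (pr1 c) x = 0"
    using decomp[OF assms] by blast
  have "{z\<in>prod_config V1 V2. lin_fun \<delta> c z = 0} =
        prod_config {x\<in>V1. lin_fun \<delta>1 (pr1 c) x = 0} {y\<in>V2. lin_fun (\<delta>-\<delta>1) (pr2 c) y = 0}"
  proof (intro set_eqI iffI)
    fix z assume "z \<in> {z\<in>prod_config V1 V2. lin_fun \<delta> c z = 0}"
    then obtain x y where xy: "x \<in> V1" "y \<in> V2" "z = vec_join x y" "lin_fun \<delta> c z = 0"
      by (auto simp: mem_prod_config)
    have "lin_fun \<delta>1 (pr1 c) x + lin_fun (\<delta>-\<delta>1) (pr2 c) y = 0" using xy lin_join[of \<delta> c x y \<delta>1] by simp
    moreover have "0 \<le> lin_fun \<delta>1 (pr1 c) x" "0 \<le> lin_fun (\<delta>-\<delta>1) (pr2 c) y"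
      using d xy by (auto simp: nonneg_on_def)
    ultimately show "z \<in> prod_config {x\<in>V1. lin_fun \<delta>1 (pr1 c) x = 0} {y\<in>V2. lin_fun (\<delta>-\<delta>1) (pr2 c) y = 0}"
      using xy by simp
  next
    fix z assume "z \<in> prod_config {x\<in>V1. lin_fun \<delta>1 (pr1 c) x = 0} {y\<in>V2. lin_fun (\<delta>-\<delta>1) (pr2 c) y = 0}"
    then obtain x y where xy: "x \<in> V1" "y \<in> V2" "z = vec_join x y"
      "lin_fun \<delta>1 (pr1 c) x = 0" "lin_fun (\<delta>-\<delta>1) (pr2 c) y = 0"
      by (auto simp: mem_prod_config)
    then show "z \<in> {z\<in>prod_config V1 V2. lin_fun \<delta> c z = 0}" using lin_join[of \<delta> c x y \<delta>1] by simp
  qed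
  then show ?thesis using d by blast
qed

lemma face_prod:
  assumes "finite V1" "V1 \<noteq> {}" "is_face (prod_config V1 V2) G"
  shows "\<exists>G1 G2. is_face V1 G1 \<and> is_face V2 G2 \<and> G1 \<noteq> {} \<and> G = prod_config G1 G2"
proof -
  obtain \<delta> c where dc: "nonneg_on (prod_config V1 V2) (lin_fun \<delta> c)" "G = {z\<in>prod_config V1 V2. lin_fun \<delta> c z = 0}"
    using assms(3) unfolding is_face_def by blast
  from face_decomp[OF assms(1,2) dc(1)] obtain \<delta>1 where d:
    "nonneg_on V1 (lin_fun \<delta>1 (pr1 c))" "nonneg_on V2 (lin_fun (\<delta>-\<delta>1) (pr2 c))"
    "{x\<in>V1. lin_fun \<delta>1 (pr1 c) x = 0} \<noteq> {}"
    "G = prod_config {x\<in>V1. lin_fun \<delta>1 (pr1 c) x = 0} {y\<in>V2. lin_fun (\<delta>-\<delta>1) (pr2 c) y = 0}"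
    using dc(2) by blast
  have "is_face V1 {x\<in>V1. lin_fun \<delta>1 (pr1 c) x = 0}" using d(1) unfolding is_face_def by blast
  moreover have "is_face V2 {y\<in>V2. lin_fun (\<delta>-\<delta>1) (pr2 c) y = 0}" using d(2) unfolding is_face_def by blast
  ultimately show ?thesis using d(3,4) by blast
qed

lemma finite_prod_config: "finite V1 \<Longrightarrow> finite V2 \<Longrightarrow> finite (prod_config V1 V2)"
  unfolding prod_config_def by simp

lemma card_image_singleton: "V = {v} \<Longrightarrow> card (f ` V) \<le> 1"
  by simp




lemma lev_fwd1:
  assumes fin: "finite V1" "V1 \<noteq> {}" "finite V2" "V2 \<noteq> {}"
    and K: "k_level (prod_config V1 V2) k"
  shows "k_level V1 k"
  unfolding k_level_def
proof (intro allI impI)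
  fix \<delta> c assume fd: "facet_defining V1 \<delta> c"
  let ?F = "{x\<in>V1. lin_fun \<delta> c x = 0}"
  have nn: "nonneg_on V1 (lin_fun \<delta> c)" and fc: "is_facet V1 ?F"
    using fd unfolding facet_defining_def by auto
  have k1: "1 \<le> k" using k_level_pos[OF finite_prod_config[OF fin(1,3)] _ K] fin by simp
  show "card (lin_fun \<delta> c ` V1) \<le> k"
  proof (cases "?F = {}")
    case True
    then have "is_facet V1 {}" using fc by (metis (no_types, lifting))
    then obtain v where "V1 = {v}" using empty_facet_singleton[OF fin(1)] by blast
    then show ?thesis using k1 by simp
  next
    case False
    let ?P = "prod_config V1 V2"
    let ?L = "lin_fun \<delta> (vec_join c 0)"
    have z: "{z\<in>?P. ?L z = 0} = prod_config ?F V2" by (rule zero_lift1)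
    have ffF: "is_face V1 ?F" "?F \<noteq> V1" using fc unfolding is_facet_def by auto
    have "is_facet ?P (prod_config ?F V2)" unfolding is_facet_def
    proof (intro conjI allI impI)
      show "is_face ?P (prod_config ?F V2)" using face_lift1[OF ffF(1)] .
      show "prod_config ?F V2 \<noteq> ?P" using prod_config_eq[OF False fin(4)] ffF(2) by blast
      fix G assume G: "is_face ?P G \<and> G \<noteq> ?P \<and> prod_config ?F V2 \<subseteq> G"
      obtain G1 G2 where g: "is_face V1 G1" "is_face V2 G2" "G1 \<noteq> {}" "G = prod_config G1 G2"
        using face_prod[OF fin(1,2)] G by blast
      have sub: "?F \<subseteq> G1" "V2 \<subseteq> G2" using prod_config_subset[OF False fin(4)] G g(4) by auto
      have "G2 = V2" using sub(2) face_subset[OF g(2)] by blast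
      have "G1 \<noteq> V1" using G g(4) \<open>G2 = V2\<close> by blast
      then have "G1 = ?F" using fc g(1) sub(1) unfolding is_facet_def by blast
      then show "G = prod_config ?F V2" using g(4) \<open>G2 = V2\<close> by simp
    qed
    then have "facet_defining ?P \<delta> (vec_join c 0)"
      unfolding facet_defining_def using z nonneg_lift1[OF nn] by simp
    then have "card (?L ` ?P) \<le> k" using K unfolding k_level_def by blast
    moreover have "?L ` ?P = lin_fun \<delta> c ` V1" by (rule image_P1[OF fin(4)]) (simp add: lin_lift1)
    ultimately show ?thesis by simp
  qed
qed

lemma lev_fwd2:
  assumes fin: "finite V1" "V1 \<noteq> {}" "finite V2" "V2 \<noteq> {}"
    and K: "k_level (prod_config V1 V2) k"
  shows "k_level V2 k"
  unfolding k_level_def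
proof (intro allI impI)
  fix \<delta> c assume fd: "facet_defining V2 \<delta> c"
  let ?F = "{x\<in>V2. lin_fun \<delta> c x = 0}"
  have nn: "nonneg_on V2 (lin_fun \<delta> c)" and fc: "is_facet V2 ?F"
    using fd unfolding facet_defining_def by auto
  have k1: "1 \<le> k" using k_level_pos[OF finite_prod_config[OF fin(1,3)] _ K] fin by simp
  show "card (lin_fun \<delta> c ` V2) \<le> k"
  proof (cases "?F = {}")
    case True
    then have "is_facet V2 {}" using fc by (metis (no_types, lifting))
    then obtain v where "V2 = {v}" using empty_facet_singleton[OF fin(3)] by blast
    then show ?thesis using k1 by simp
  next
    case False
    let ?P = "prod_config V1 V2"
    let ?L = "lin_fun \<delta> (vec_join 0 c)"
    have z: "{z\<in>?P. ?L z = 0} = prod_config V1 ?F" by (rule zero_lift2)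
    have ffF: "is_face V2 ?F" "?F \<noteq> V2" using fc unfolding is_facet_def by auto
    have "is_facet ?P (prod_config V1 ?F)" unfolding is_facet_def
    proof (intro conjI allI impI)
      show "is_face ?P (prod_config V1 ?F)" using face_lift2[OF ffF(1)] .
      show "prod_config V1 ?F \<noteq> ?P" using prod_config_eq[OF fin(2) False] ffF(2) by blast
      fix G assume G: "is_face ?P G \<and> G \<noteq> ?P \<and> prod_config V1 ?F \<subseteq> G"
      obtain G1 G2 where g: "is_face V1 G1" "is_face V2 G2" "G1 \<noteq> {}" "G = prod_config G1 G2"
        using face_prod[OF fin(1,2)] G by blast
      have sub: "V1 \<subseteq> G1" "?F \<subseteq> G2" using prod_config_subset[OF fin(2) False] G g(4) by auto
      have "G1 = V1" using sub(1) face_subset[OF g(1)] by blast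
      have "G2 \<noteq> V2" using G g(4) \<open>G1 = V1\<close> by blast
      then have "G2 = ?F" using fc g(2) sub(2) unfolding is_facet_def by blast
      then show "G = prod_config V1 ?F" using g(4) \<open>G1 = V1\<close> by simp
    qed
    then have "facet_defining ?P \<delta> (vec_join 0 c)"
      unfolding facet_defining_def using z nonneg_lift2[OF nn] by simp
    then have "card (?L ` ?P) \<le> k" using K unfolding k_level_def by blast
    moreover have "?L ` ?P = lin_fun \<delta> c ` V2" by (rule image_P2[OF fin(2)]) (simp add: lin_lift2)
    ultimately show ?thesis by simp
  qed
qed




lemma lev_back:
  assumes fin: "finite V1" "V1 \<noteq> {}" "finite V2" "V2 \<noteq> {}"
    and K1: "k_level V1 k" and K2: "k_level V2 k"
  shows "k_level (prod_config V1 V2) k"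
  unfolding k_level_def
proof (intro allI impI)
  fix \<delta> c
  let ?P = "prod_config V1 V2"
  let ?Z = "{z\<in>?P. lin_fun \<delta> c z = 0}"
  assume fd: "facet_defining ?P \<delta> c"
  have nn: "nonneg_on ?P (lin_fun \<delta> c)" and fc: "is_facet ?P ?Z"
    using fd unfolding facet_defining_def by auto
  have k1: "1 \<le> k" using k_level_pos[OF fin(1,2) K1] .
  obtain \<delta>1 where d:
    "nonneg_on V1 (lin_fun \<delta>1 (pr1 c))" "nonneg_on V2 (lin_fun (\<delta>-\<delta>1) (pr2 c))"
    "{x\<in>V1. lin_fun \<delta>1 (pr1 c) x = 0} \<noteq> {}"
    "?Z = prod_config {x\<in>V1. lin_fun \<delta>1 (pr1 c) x = 0} {y\<in>V2. lin_fun (\<delta>-\<delta>1) (pr2 c) y = 0}"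
    using face_decomp[OF fin(1,2) nn] by blast
  define Z1 where "Z1 = {x\<in>V1. lin_fun \<delta>1 (pr1 c) x = 0}"
  define Z2 where "Z2 = {y\<in>V2. lin_fun (\<delta>-\<delta>1) (pr2 c) y = 0}"
  have Z: "?Z = prod_config Z1 Z2" "Z1 \<noteq> {}" using d(3,4) unfolding Z1_def Z2_def by auto
  have fZ1: "is_face V1 Z1" using d(1) unfolding is_face_def Z1_def by blast
  have fZ2: "is_face V2 Z2" using d(2) unfolding is_face_def Z2_def by blast
  have lj: "lin_fun \<delta> c (vec_join x y) = lin_fun \<delta>1 (pr1 c) x + lin_fun (\<delta>-\<delta>1) (pr2 c) y" for x y
    by (rule lin_join)
  have fZ: "is_face ?P ?Z" "?Z \<noteq> ?P" "\<And>G. is_face ?P G \<Longrightarrow> G \<noteq> ?P \<Longrightarrow> ?Z \<subseteq> G \<Longrightarrow> G = ?Z"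
    using fc unfolding is_facet_def by blast+
  show "card (lin_fun \<delta> c ` ?P) \<le> k"
  proof (cases "?Z = {}")
    case True
    then have "is_facet ?P {}" using fc by (metis (no_types, lifting))
    then obtain v where "?P = {v}" using empty_facet_singleton[OF finite_prod_config[OF fin(1,3)]] by blast
    then show ?thesis using k1 by simp
  next
    case False
    then have Z2ne: "Z2 \<noteq> {}" using Z by simp
    show ?thesis
    proof (cases "Z1 = V1")
      case False
      have f1: "is_face ?P (prod_config Z1 V2)" using face_lift1[OF fZ1] .
      have n1: "prod_config Z1 V2 \<noteq> ?P" using prod_config_eq[OF Z(2) fin(4)] False by blast
      have "?Z \<subseteq> prod_config Z1 V2" unfolding Z(1) by (rule prod_config_mono) (auto simp: Z2_def)
      then have eq: "prod_config Z1 V2 = ?Z" using fZ(3)[OF f1 n1] by blast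
      then have "Z2 = V2" using prod_config_eq[OF Z(2) fin(4)] Z(1) by metis
      have "is_facet V1 Z1" unfolding is_facet_def
      proof (intro conjI allI impI)
        show "is_face V1 Z1" "Z1 \<noteq> V1" using fZ1 False by auto
        fix G assume G: "is_face V1 G \<and> G \<noteq> V1 \<and> Z1 \<subseteq> G"
        then have Gne: "G \<noteq> {}" using Z(2) by blast
        have f: "is_face ?P (prod_config G V2)" using face_lift1 G by blast
        have n: "prod_config G V2 \<noteq> ?P" using prod_config_eq[OF Gne fin(4)] G by blast
        have "?Z \<subseteq> prod_config G V2" using eq G prod_config_mono by blast
        then have "prod_config G V2 = prod_config Z1 V2" using fZ(3)[OF f n] eq by simp
        then show "G = Z1" using prod_config_eq[OF Gne fin(4)] by blast
      qed
      then have "facet_defining V1 \<delta>1 (pr1 c)" unfolding facet_defining_def Z1_def using d(1) by simp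
      then have "card (lin_fun \<delta>1 (pr1 c) ` V1) \<le> k" using K1 unfolding k_level_def by blast
      moreover have "lin_fun \<delta> c ` ?P = lin_fun \<delta>1 (pr1 c) ` V1"
      proof (rule image_P1[OF fin(4)])
        fix x y assume "x \<in> V1" "y \<in> V2"
        then have "lin_fun (\<delta>-\<delta>1) (pr2 c) y = 0" using \<open>Z2 = V2\<close> unfolding Z2_def by blast
        then show "lin_fun \<delta> c (vec_join x y) = lin_fun \<delta>1 (pr1 c) x" using lj by simp
      qed
      ultimately show ?thesis by simp
    next
      case True
      have "Z2 \<noteq> V2" using fZ(2) Z(1) True by blast
      have "is_facet V2 Z2" unfolding is_facet_def
      proof (intro conjI allI impI)
        show "is_face V2 Z2" "Z2 \<noteq> V2" using fZ2 \<open>Z2 \<noteq> V2\<close> by auto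
        fix G assume G: "is_face V2 G \<and> G \<noteq> V2 \<and> Z2 \<subseteq> G"
        then have Gne: "G \<noteq> {}" using Z2ne by blast
        have f: "is_face ?P (prod_config V1 G)" using face_lift2 G by blast
        have n: "prod_config V1 G \<noteq> ?P" using prod_config_eq[OF fin(2) Gne] G by blast
        have "?Z \<subseteq> prod_config V1 G" using Z(1) True G prod_config_mono by blast
        then have "prod_config V1 G = prod_config V1 Z2" using fZ(3)[OF f n] Z(1) True by simp
        then show "G = Z2" using prod_config_eq[OF fin(2) Gne] by blast
      qed
      then have "facet_defining V2 (\<delta>-\<delta>1) (pr2 c)" unfolding facet_defining_def Z2_def using d(2) by simp
      then have "card (lin_fun (\<delta>-\<delta>1) (pr2 c) ` V2) \<le> k" using K2 unfolding k_level_def by blast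
      moreover have "lin_fun \<delta> c ` ?P = lin_fun (\<delta>-\<delta>1) (pr2 c) ` V2"
      proof (rule image_P2[OF fin(2)])
        fix x y assume "x \<in> V1" "y \<in> V2"
        then have "lin_fun \<delta>1 (pr1 c) x = 0" using True unfolding Z1_def by blast
        then show "lin_fun \<delta> c (vec_join x y) = lin_fun (\<delta>-\<delta>1) (pr2 c) y" using lj by simp
      qed
      ultimately show ?thesis by simp
    qed
  qed
qed

theorem proposition2p2:
  fixes V1 :: "(real^'n::finite) set" and V2 :: "(real^'m::finite) set"
  assumes "finite V1" "V1 \<noteq> {}" "finite V2" "V2 \<noteq> {}"
  shows "theta_rank (prod_config V1 V2) = max (theta_rank V1) (theta_rank V2)
       \<and> levelness (prod_config V1 V2) = max (levelness V1) (levelness V2)"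
proof
  have "theta_rank (prod_config V1 V2) = (LEAST k. thetaP V1 k \<and> thetaP V2 k)"
    unfolding theta_rank_eq by (rule arg_cong[where f=Least]) (simp add: fun_eq_iff thetaP_prod[OF assms])
  also have "\<dots> = max (LEAST k. thetaP V1 k) (LEAST k. thetaP V2 k)"
    using Least_conj_max[of "thetaP V1" "thetaP V2", OF _ _ thetaP_card[OF assms(1)] thetaP_card[OF assms(3)]]
      thetaP_mono[of V1] thetaP_mono[of V2] by metis
  finally show "theta_rank (prod_config V1 V2) = max (theta_rank V1) (theta_rank V2)"
    unfolding theta_rank_eq .
next
  have eq: "k_level (prod_config V1 V2) k \<longleftrightarrow> k_level V1 k \<and> k_level V2 k" for k
    using lev_back[OF assms] lev_fwd1[OF assms] lev_fwd2[OF assms] by blast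
  have "levelness (prod_config V1 V2) = (LEAST k. k_level V1 k \<and> k_level V2 k)"
    unfolding levelness_def eq ..
  also have "\<dots> = max (LEAST k. k_level V1 k) (LEAST k. k_level V2 k)"
    using Least_conj_max[of "k_level V1" "k_level V2", OF _ _ k_level_card[OF assms(1)] k_level_card[OF assms(3)]]
      k_level_mono[of V1] k_level_mono[of V2] by metis
  finally show "levelness (prod_config V1 V2) = max (levelness V1) (levelness V2)"
    unfolding levelness_def .
qed


end
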